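(* Let $0<\upsilon<1/2$. For each $m=1,2,\dots$ let $\alpha_m,\beta_m>0$ with $\alpha_m+\beta_m=m$, and let $\mu_m$ be the truncated $\mathrm{Beta}(\alpha_m,\beta_m)$ probability measure on $[\upsilon,1-\upsilon]$, i.e., the standard $\mathrm{Beta}(\alpha_m,\beta_m)$ probability measure on $[0,1]$ restricted to $[\upsilon,1-\upsilon]$ and normalized. Let $I\subseteq[\upsilon,1-\upsilon]$ be a sub-interval containing $\theta$ in its interior. If $\left|\frac{\alpha_m}{m}-\theta\right|=\frac{o(\log m)}{\sqrt m}$ as $m\to\infty$, then $\inf_{m\ge1}\mu_m(I)>0$. *)

theory Defs
  imports "HOL-Probability.Probability" "HOL-Library.Landau_Symbols"
begin

definition beta_density :: "real \<Rightarrow> real \<Rightarrow> real \<Rightarrow> real" where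
  "beta_density a b x =
     (if 0 < x \<and> x < 1 then x powr (a - 1) * (1 - x) powr (b - 1) / Beta a b else 0)"

definition beta_measure :: "real \<Rightarrow> real \<Rightarrow> real measure" where
  "beta_measure a b = density lborel (\<lambda>x. ennreal (beta_density a b x))"

definition trunc_beta_measure :: "real \<Rightarrow> real \<Rightarrow> real \<Rightarrow> real measure" where
  "trunc_beta_measure u a b =
     density lborel (\<lambda>x. ennreal (indicator {u..1-u} x * beta_density a b x
                                    / measure (beta_measure a b) {u..1-u}))"

end

theory Submission
  imports Defs "HOL-Real_Asymp.Real_Asymp"
begin


definition gg :: "real \<Rightarrow> real \<Rightarrow> real \<Rightarrow> real" where
  "gg a b x = exp (a * ln x + b * ln (1 - x))"

lemma gg_deriv:
  assumes "0 < t" "t < 1"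
  shows "((\<lambda>x. a * ln x + b * ln (1 - x)) has_real_derivative (a / t - b / (1 - t))) (at t)"
  using assms by (auto intro!: derivative_eq_intros simp: field_simps)

lemma gg_mono_left:
  assumes a: "a > 0" "b > 0" and "0 < x" "x \<le> y" "y \<le> a / (a + b)"
  shows "gg a b x \<le> gg a b y"
proof -
  have "a * ln x + b * ln (1 - x) \<le> a * ln y + b * ln (1 - y)"
  proof (rule DERIV_nonneg_imp_nondecreasing[OF \<open>x \<le> y\<close>])
    fix t assume t: "x \<le> t" "t \<le> y"
    have p1: "a / (a + b) < 1" using a by simp
    have t0: "0 < t" "t < 1" using t assms p1 by linarith+
    have "t * (a + b) \<le> y * (a + b)" using t a by (intro mult_right_mono) auto
    also have "\<dots> \<le> a" using assms by (simp add: field_simps)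
    finally have "t * (a + b) \<le> a" .
    then have "b * t \<le> a * (1 - t)" by (simp add: algebra_simps)
    then have "a / t - b / (1 - t) \<ge> 0" using t0 by (simp add: field_simps)
    then show "\<exists>y. ((\<lambda>x. a * ln x + b * ln (1 - x)) has_real_derivative y) (at t) \<and> 0 \<le> y"
      using gg_deriv[OF t0] by blast
  qed
  then show ?thesis unfolding gg_def by simp
qed

lemma gg_mono_right:
  assumes a: "a > 0" "b > 0" and "a / (a + b) \<le> x" "x \<le> y" "y < 1"
  shows "gg a b y \<le> gg a b x"
proof -
  have "a * ln y + b * ln (1 - y) \<le> a * ln x + b * ln (1 - x)"
  proof (rule DERIV_nonpos_imp_nonincreasing[OF \<open>x \<le> y\<close>])
    fix t assume t: "x \<le> t" "t \<le> y"
    have p1: "0 < a / (a + b)" using a by simp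
    have t0: "0 < t" "t < 1" using t assms p1 by linarith+
    have "t * (a + b) \<ge> x * (a + b)" using t a by (intro mult_right_mono) auto
    moreover have "x * (a + b) \<ge> a" using assms by (simp add: field_simps)
    ultimately have "t * (a + b) \<ge> a" by linarith
    then have "b * t \<ge> a * (1 - t)" by (simp add: algebra_simps)
    then have "a / t - b / (1 - t) \<le> 0" using t0 by (simp add: field_simps)
    then show "\<exists>y. ((\<lambda>x. a * ln x + b * ln (1 - x)) has_real_derivative y) (at t) \<and> y \<le> 0"
      using gg_deriv[OF t0] by blast
  qed
  then show ?thesis unfolding gg_def by simp
qed

lemma gg_pos: "gg a b x > 0" unfolding gg_def by simp

lemma gg_le1:
  assumes "a > 0" "b > 0" "0 < x" "x < 1"
  shows "gg a b x \<le> 1"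
proof -
  have "a * ln x \<le> 0" using assms by (simp add: mult_nonneg_nonpos)
  moreover have "b * ln (1 - x) \<le> 0" using assms by (simp add: mult_nonneg_nonpos)
  ultimately show ?thesis unfolding gg_def by simp
qed

lemma gg_powr:
  assumes "0 < x" "x < 1"
  shows "x powr (a - 1) * (1 - x) powr (b - 1) = gg a b x / (x * (1 - x))"
proof -
  have "exp (ln x + ln (1 - x)) = x * (1 - x)" using assms by (simp add: exp_add)
  moreover have "x powr (a - 1) * (1 - x) powr (b - 1) = exp ((a * ln x + b * ln (1 - x)) - (ln x + ln (1 - x)))"
    using assms by (simp add: powr_def exp_add[symmetric] algebra_simps)
  ultimately show ?thesis unfolding gg_def exp_diff by simp
qed



lemma gg_meas[measurable]: "gg a b \<in> borel_measurable borel"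
  unfolding gg_def by measurable

lemma gg_quasi:
  assumes a: "a > 0" "b > 0" and "0 < c" "c \<le> x" "x \<le> d" "d < 1"
  shows "min (gg a b c) (gg a b d) \<le> gg a b x"
proof (cases "x \<le> a / (a + b)")
  case True
  then have "gg a b c \<le> gg a b x" using assms by (intro gg_mono_left) auto
  then show ?thesis by simp
next
  case False
  then have "gg a b d \<le> gg a b x" using assms by (intro gg_mono_right) auto
  then show ?thesis by simp
qed

lemma int_pos:
  assumes a: "a > 0" "b > 0" and "0 < c" "c < d" "d < 1"
  shows "(\<integral>\<^sup>+x. ennreal (gg a b x) * indicator {c..d} x \<partial>lborel) \<ge> ennreal (min (gg a b c) (gg a b d) * (d - c))"
proof -
  have "(\<integral>\<^sup>+x. ennreal (gg a b x) * indicator {c..d} x \<partial>lborel) \<ge>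
        (\<integral>\<^sup>+x. ennreal (min (gg a b c) (gg a b d)) * indicator {c..d} x \<partial>lborel)"
    using assms by (intro nn_integral_mono) (auto split: split_indicator intro!: ennreal_leI gg_quasi)
  also have "(\<integral>\<^sup>+x. ennreal (min (gg a b c) (gg a b d)) * indicator {c..d} x \<partial>lborel)
     = ennreal (min (gg a b c) (gg a b d) * (d - c))"
    using assms by (simp add: nn_integral_cmult_indicator ennreal_mult gg_pos less_imp_le)
  finally show ?thesis .
qed

lemma int_fin:
  assumes a: "a > 0" "b > 0" and "0 < c" "d < 1"
  shows "(\<integral>\<^sup>+x. ennreal (gg a b x) * indicator {c..d} x \<partial>lborel) \<le> ennreal (max 0 (d - c))"
proof -
  have "(\<integral>\<^sup>+x. ennreal (gg a b x) * indicator {c..d} x \<partial>lborel) \<le>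
        (\<integral>\<^sup>+x. indicator {c..d} x \<partial>lborel)"
    using assms by (intro nn_integral_mono) (auto split: split_indicator intro!: gg_le1)
  also have "\<dots> = ennreal (max 0 (d - c))" by (auto simp: max_def)
  finally show ?thesis .
qed

lemma int_split:
  assumes a: "a > 0" "b > 0" and u: "0 < u" "u < 1/2" and L: "L > 0"
    and p: "u \<le> a/(a+b) - L" "a/(a+b) + L \<le> 1 - u"
  defines "p \<equiv> a/(a+b)"
  shows "(\<integral>\<^sup>+x. ennreal (gg a b x) * indicator {u..1-u} x \<partial>lborel) \<le>
         ennreal (1/L + 1) * (\<integral>\<^sup>+x. ennreal (gg a b x) * indicator {p-L..p+L} x \<partial>lborel)"
proof -
  let ?s = "gg a b (p - L) + gg a b (p + L)"
  let ?J = "(\<integral>\<^sup>+x. ennreal (gg a b x) * indicator {p-L..p+L} x \<partial>lborel)"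
  have "(\<integral>\<^sup>+x. ennreal (gg a b x) * indicator {u..1-u} x \<partial>lborel) \<le>
        (\<integral>\<^sup>+x. ennreal ?s * indicator {u..1-u} x + ennreal (gg a b x) * indicator {p-L..p+L} x \<partial>lborel)"
  proof (intro nn_integral_mono)
    fix x
    show "ennreal (gg a b x) * indicator {u..1-u} x \<le> ennreal ?s * indicator {u..1-u} x + ennreal (gg a b x) * indicator {p-L..p+L} x"
    proof (cases "x \<in> {u..1-u}")
      case False then show ?thesis by simp
    next
      case xin: True
      show ?thesis
      proof (cases "x < p - L")
        case True
        then have "gg a b x \<le> gg a b (p - L)" using xin u a L p_def by (intro gg_mono_left) auto
        then have "gg a b x \<le> ?s" using gg_pos[of a b "p+L"] by linarith
        then show ?thesis using xin by (simp add: ennreal_leI add_increasing2)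
      next
        case False
        show ?thesis
        proof (cases "x > p + L")
          case True
          then have "gg a b x \<le> gg a b (p + L)" using xin u a L p_def by (intro gg_mono_right) auto
          then have "gg a b x \<le> ?s" using gg_pos[of a b "p-L"] by linarith
          then show ?thesis using xin by (simp add: ennreal_leI add_increasing2)
        next
          case False
          then have "x \<in> {p-L..p+L}" using \<open>\<not> x < p - L\<close> by auto
          then show ?thesis using xin by (simp add: add_increasing)
        qed
      qed
    qed
  qed
  also have "\<dots> = ennreal ?s * emeasure lborel {u..1-u} + ?J"
    by (subst nn_integral_add) (auto simp: nn_integral_cmult_indicator)
  also have "\<dots> \<le> ennreal ?s + ?J"
  proof -
    have "emeasure lborel {u..1-u} \<le> 1" using u by simp
    then have "ennreal ?s * emeasure lborel {u..1-u} \<le> ennreal ?s * 1"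
      by (intro mult_left_mono) auto
    then show ?thesis by (simp add: add_right_mono)
  qed
  also have "ennreal ?s \<le> ennreal (1/L) * ?J"
  proof -
    have "?J \<ge> (\<integral>\<^sup>+x. ennreal (gg a b (p - L)) * indicator {p-L..<p} x + ennreal (gg a b (p + L)) * indicator {p..p+L} x \<partial>lborel)"
    proof (intro nn_integral_mono)
      fix x
      show "ennreal (gg a b (p - L)) * indicator {p-L..<p} x + ennreal (gg a b (p + L)) * indicator {p..p+L} x
            \<le> ennreal (gg a b x) * indicator {p-L..p+L} x"
      proof (cases "x \<in> {p-L..<p}")
        case True
        then have "gg a b (p - L) \<le> gg a b x" using u a L p p_def by (intro gg_mono_left) auto
        then show ?thesis using True by (simp add: ennreal_leI indicator_def)
      next
        case False
        show ?thesis
        proof (cases "x \<in> {p..p+L}")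
          case True
          then have "gg a b (p + L) \<le> gg a b x" using u a L p p_def by (intro gg_mono_right) auto
          then show ?thesis using True False by (simp add: ennreal_leI indicator_def)
        next
          case False2: False
          then show ?thesis using False by simp
        qed
      qed
    qed
    also have "(\<integral>\<^sup>+x. ennreal (gg a b (p - L)) * indicator {p-L..<p} x + ennreal (gg a b (p + L)) * indicator {p..p+L} x \<partial>lborel)
        = ennreal (gg a b (p - L)) * ennreal L + ennreal (gg a b (p + L)) * ennreal L"
      using L by (subst nn_integral_add) (auto simp: nn_integral_cmult_indicator)
    also have "\<dots> = ennreal (L * ?s)"
      using L gg_pos[of a b "p-L"] gg_pos[of a b "p+L"]
      by (simp add: ennreal_mult'[symmetric] ennreal_plus[symmetric] distrib_left del: ennreal_plus)
    finally have "ennreal (L * ?s) \<le> ?J" .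
    then have "ennreal (1/L) * ennreal (L * ?s) \<le> ennreal (1/L) * ?J" by (intro mult_left_mono) auto
    moreover have "ennreal (1/L) * ennreal (L * ?s) = ennreal ?s"
      using L gg_pos[of a b] by (simp add: ennreal_mult[symmetric] less_imp_le)
    ultimately show ?thesis by simp
  qed
  also have "ennreal (1/L) * ?J + ?J = ennreal (1/L + 1) * ?J"
  proof -
    have "ennreal (1/L + 1) = ennreal (1/L) + 1" using L by (simp add: ennreal_plus)
    then show ?thesis by (simp add: distrib_right)
  qed
  finally show ?thesis by (simp add: add_right_mono)
qed



lemma Beta_pos_real: "a > 0 \<Longrightarrow> b > 0 \<Longrightarrow> Beta a b > (0::real)"
  unfolding Beta_def by (simp add: Gamma_real_pos)

lemma bd_meas[measurable]: "beta_density a b \<in> borel_measurable borel"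
  unfolding beta_density_def by measurable

lemma bd_eq:
  assumes "0 < x" "x < 1"
  shows "beta_density a b x = gg a b x / (x * (1 - x)) / Beta a b"
  using assms by (simp add: beta_density_def gg_powr)

lemma xx_bounds:
  fixes u x :: real
  assumes "0 < u" "u < 1/2" "x \<in> {u..1-u}"
  shows "u * (1 - u) \<le> x * (1 - x)" "x * (1 - x) \<le> 1/4"
proof -
  have "x * (1 - x) - u * (1 - u) = (x - u) * (1 - u - x)" by algebra
  moreover have "(x - u) * (1 - u - x) \<ge> 0" using assms by simp
  ultimately show "u * (1 - u) \<le> x * (1 - x)" by linarith
  have "1/4 - x * (1 - x) = (x - 1/2)^2" by (simp add: algebra_simps power2_eq_square)
  then show "x * (1 - x) \<le> 1/4" by (metis diff_ge_0_iff_ge zero_le_power2)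
qed

lemma bd_lo:
  assumes "a > 0" "b > 0" "0 < u" "u < 1/2" "x \<in> {u..1-u}"
  shows "4 / Beta a b * gg a b x \<le> beta_density a b x"
proof -
  have x: "0 < x" "x < 1" using assms by auto
  have B: "Beta a b > 0" using assms Beta_pos_real by auto
  have q: "0 < x * (1 - x)" "x * (1 - x) \<le> 1/4" using x xx_bounds[OF assms(3-5)] by auto
  have "gg a b x / (1/4) \<le> gg a b x / (x * (1 - x))"
    using q gg_pos[of a b x] by (intro divide_left_mono) auto
  then have "4 * gg a b x \<le> gg a b x / (x * (1 - x))" by simp
  then have "4 * gg a b x / Beta a b \<le> gg a b x / (x * (1 - x)) / Beta a b"
    using B by (intro divide_right_mono) auto
  then show ?thesis by (simp add: bd_eq[OF x])
qed

lemma bd_hi: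
  assumes "a > 0" "b > 0" "0 < u" "u < 1/2" "x \<in> {u..1-u}"
  shows "beta_density a b x \<le> 1 / (u * (1 - u) * Beta a b) * gg a b x"
proof -
  have x: "0 < x" "x < 1" using assms by auto
  have B: "Beta a b > 0" using assms Beta_pos_real by auto
  have q: "u * (1 - u) \<le> x * (1 - x)" "0 < u * (1 - u)" using xx_bounds[OF assms(3-5)] assms by auto
  have "gg a b x / (x * (1 - x)) \<le> gg a b x / (u * (1 - u))"
    using q gg_pos[of a b x] by (intro divide_left_mono) auto
  then have "gg a b x / (x * (1 - x)) / Beta a b \<le> gg a b x / (u * (1 - u)) / Beta a b"
    using B by (intro divide_right_mono) auto
  then show ?thesis by (simp add: bd_eq[OF x])
qed



lemma main_bound:
  fixes a b u c d :: real and I :: "real set"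
  assumes a: "a > 0" "b > 0" and u: "0 < u" "u < 1/2"
    and I: "I \<subseteq> {u..1-u}" "I \<in> sets lborel" "{c..d} \<subseteq> I" and cd: "c < d"
  defines "GJ \<equiv> (\<integral>\<^sup>+x. ennreal (gg a b x) * indicator {c..d} x \<partial>lborel)"
    and "GI \<equiv> (\<integral>\<^sup>+x. ennreal (gg a b x) * indicator {u..1-u} x \<partial>lborel)"
  shows "measure (trunc_beta_measure u a b) I \<ge> 4 * u * (1 - u) * enn2real GJ / enn2real GI"
    and "enn2real GJ > 0" "enn2real GI \<ge> enn2real GJ"
proof -
  have "c \<in> I" "d \<in> I" using I(3) cd by auto
  then have cdu: "u \<le> c" "d \<le> 1 - u" using I(1) by auto
  define B where "B = Beta a b"
  have B: "B > 0" unfolding B_def using a Beta_pos_real by auto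
  have GJpos: "GJ \<ge> ennreal (min (gg a b c) (gg a b d) * (d - c))"
    unfolding GJ_def using a u cd cdu by (intro int_pos) auto
  have mpos: "min (gg a b c) (gg a b d) * (d - c) > 0" using cd gg_pos[of a b] by simp
  have GIfin: "GI \<le> ennreal (max 0 (1 - u - u))"
    unfolding GI_def using a u by (intro int_fin) auto
  have GJGI: "GJ \<le> GI" unfolding GJ_def GI_def using cdu
    by (intro nn_integral_mono) (auto split: split_indicator)
  have GIt: "GI < top" using GIfin by (simp add: le_less_trans)
  have GJt: "GJ < top" using GJGI GIt by (simp add: le_less_trans)
  have GJr: "enn2real GJ > 0"
    using GJpos mpos GJt by (metis enn2real_ennreal enn2real_mono less_imp_le less_le_trans)
  show "enn2real GJ > 0" by fact
  show GIr: "enn2real GI \<ge> enn2real GJ" using GJGI GIt by (intro enn2real_mono) auto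
  let ?S = "emeasure (beta_measure a b) {u..1-u}"
  have S: "?S = (\<integral>\<^sup>+x. ennreal (beta_density a b x) * indicator {u..1-u} x \<partial>lborel)"
    unfolding beta_measure_def by (rule emeasure_density) auto
  have Bc: "0 \<le> 1 / (u * (1 - u) * B)" "0 \<le> 4 / B" using B u by auto
  have Shi: "?S \<le> ennreal (1 / (u * (1 - u) * B)) * GI"
    unfolding S GI_def
  proof (subst nn_integral_cmult[symmetric], simp, intro nn_integral_mono)
    fix x
    show "ennreal (beta_density a b x) * indicator {u..1 - u} x
         \<le> ennreal (1 / (u * (1 - u) * B)) * (ennreal (gg a b x) * indicator {u..1 - u} x)"
    proof (cases "x \<in> {u..1-u}")
      case True
      then have "beta_density a b x \<le> 1 / (u * (1 - u) * B) * gg a b x"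
        using bd_hi[OF a u True] B_def by simp
      then have "ennreal (beta_density a b x) \<le> ennreal (1 / (u * (1 - u) * B)) * ennreal (gg a b x)"
        using Bc by (simp add: ennreal_mult'[symmetric] ennreal_leI)
      then show ?thesis using True by simp
    qed simp
  qed
  have Slo: "?S \<ge> ennreal (4 / B) * GJ"
    unfolding S GJ_def
  proof (subst nn_integral_cmult[symmetric], simp, intro nn_integral_mono)
    fix x
    show "ennreal (4 / B) * (ennreal (gg a b x) * indicator {c..d} x)
         \<le> ennreal (beta_density a b x) * indicator {u..1 - u} x"
    proof (cases "x \<in> {c..d}")
      case True
      then have xu: "x \<in> {u..1-u}" using cdu by auto
      then have "4 / B * gg a b x \<le> beta_density a b x"
        using bd_lo[OF a u xu] B_def by simp
      then have "ennreal (4 / B) * ennreal (gg a b x) \<le> ennreal (beta_density a b x)"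
        using Bc by (simp add: ennreal_mult'[symmetric] ennreal_leI)
      then show ?thesis using True xu by simp
    qed simp
  qed
  define D where "D = measure (beta_measure a b) {u..1-u}"
  have St: "?S < top"
    using Shi GIt B u by (metis ennreal_less_top ennreal_mult_less_top le_less_trans)
  have SD: "?S = ennreal D" unfolding D_def measure_def using St by simp
  have Dpos: "D > 0"
  proof -
    have "0 < ennreal (4 / B) * GJ" using B GJr
      by (metis divide_pos_pos enn2real_eq_0_iff ennreal_eq_0_iff mult_eq_0_iff not_gr_zero zero_less_numeral less_le not_le)
    then have "0 < ennreal D" using Slo SD by (metis less_le_trans)
    then show ?thesis by (simp add: ennreal_less_zero_iff)
  qed
  have Dle: "D \<le> 1 / (u * (1 - u) * B) * enn2real GI"
  proof -
    have "D = enn2real ?S" using SD Dpos by simp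
    also have "\<dots> \<le> enn2real (ennreal (1 / (u * (1 - u) * B)) * GI)"
      using Shi GIt by (intro enn2real_mono) (auto simp: ennreal_mult_less_top)
    also have "\<dots> = 1 / (u * (1 - u) * B) * enn2real GI"
      using u B by (simp add: enn2real_mult)
    finally show ?thesis .
  qed
  let ?F = "\<lambda>x. ennreal (indicator {u..1-u} x * beta_density a b x / D)"
  have T: "emeasure (trunc_beta_measure u a b) I = (\<integral>\<^sup>+x. ?F x * indicator I x \<partial>lborel)"
    unfolding trunc_beta_measure_def D_def[symmetric] using I(2) by (intro emeasure_density) auto
  have Tlo: "emeasure (trunc_beta_measure u a b) I \<ge> ennreal (4 / (B * D)) * GJ"
    unfolding T GJ_def
  proof (subst nn_integral_cmult[symmetric], simp, intro nn_integral_mono)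
    fix x
    show "ennreal (4 / (B * D)) * (ennreal (gg a b x) * indicator {c..d} x) \<le> ?F x * indicator I x"
    proof (cases "x \<in> {c..d}")
      case True
      then have xu: "x \<in> {u..1-u}" "x \<in> I" using cdu I(3) by auto
      then have "4 / B * gg a b x \<le> beta_density a b x"
        using bd_lo[OF a u xu(1)] B_def by simp
      then have "4 / B * gg a b x / D \<le> beta_density a b x / D"
        using Dpos by (intro divide_right_mono) auto
      then have "4 / (B * D) * gg a b x \<le> indicator {u..1-u} x * beta_density a b x / D"
        using xu by simp
      then have "ennreal (4 / (B * D)) * ennreal (gg a b x) \<le> ?F x"
        using B Dpos by (simp add: ennreal_mult'[symmetric] ennreal_leI)
      then show ?thesis using True xu by simp
    qed simp
  qed
  have Thi: "emeasure (trunc_beta_measure u a b) I \<le> ennreal (1 / (u * (1 - u) * B * D))"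
  proof -
    have "emeasure (trunc_beta_measure u a b) I \<le>
        (\<integral>\<^sup>+x. ennreal (1 / (u * (1 - u) * B * D)) * indicator {u..1-u} x \<partial>lborel)"
      unfolding T
    proof (intro nn_integral_mono)
      fix x
      show "?F x * indicator I x \<le> ennreal (1 / (u * (1 - u) * B * D)) * indicator {u..1 - u} x"
      proof (cases "x \<in> {u..1-u}")
        case True
        have "beta_density a b x \<le> 1 / (u * (1 - u) * B) * gg a b x"
          using bd_hi[OF a u True] B_def by simp
        also have "\<dots> \<le> 1 / (u * (1 - u) * B)"
          using gg_le1[OF a, of x] True u B by (intro mult_left_le) auto
        finally have "beta_density a b x / D \<le> 1 / (u * (1 - u) * B) / D"
          using Dpos by (intro divide_right_mono) auto
        then show ?thesis using True by (auto intro!: ennreal_leI simp: indicator_def)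
      qed simp
    qed
    also have "\<dots> = ennreal (1 / (u * (1 - u) * B * D)) * ennreal (1 - u - u)"
      using u by (simp add: nn_integral_cmult_indicator)
    also have "\<dots> \<le> ennreal (1 / (u * (1 - u) * B * D)) * 1"
      using u by (intro mult_left_mono) auto
    finally show ?thesis by simp
  qed
  have "measure (trunc_beta_measure u a b) I \<ge> enn2real (ennreal (4 / (B * D)) * GJ)"
    unfolding measure_def using Tlo Thi by (intro enn2real_mono) (auto simp: le_less_trans)
  also have "enn2real (ennreal (4 / (B * D)) * GJ) = 4 / (B * D) * enn2real GJ"
    using B Dpos by (simp add: enn2real_mult)
  finally have m1: "measure (trunc_beta_measure u a b) I \<ge> 4 / (B * D) * enn2real GJ" .
  have GIpos: "enn2real GI > 0" using GJr GIr by linarith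
  have "B * D \<le> enn2real GI / (u * (1 - u))"
    using Dle B u by (simp add: field_simps)
  then have "4 / (enn2real GI / (u * (1 - u))) \<le> 4 / (B * D)"
    using B Dpos GIpos u by (intro divide_left_mono) (auto intro!: mult_pos_pos divide_pos_pos)
  then have "4 * u * (1 - u) / enn2real GI \<le> 4 / (B * D)" by (simp add: field_simps)
  then have "4 * u * (1 - u) / enn2real GI * enn2real GJ \<le> 4 / (B * D) * enn2real GJ"
    using GJr by (intro mult_right_mono) auto
  then show "measure (trunc_beta_measure u a b) I \<ge> 4 * u * (1 - u) * enn2real GJ / enn2real GI"
    using m1 by simp
qed



lemma ratio_bound:
  assumes a: "a > 0" "b > 0" and u: "0 < u" "u < 1/2" and L: "L > 0"
    and p: "u \<le> a/(a+b) - L" "a/(a+b) + L \<le> 1 - u"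
    and I: "I \<subseteq> {u..1-u}" "I \<in> sets lborel" "{a/(a+b)-L..a/(a+b)+L} \<subseteq> I"
  shows "measure (trunc_beta_measure u a b) I \<ge> 4 * u * (1 - u) / (1/L + 1)"
proof -
  define p where "p = a/(a+b)"
  define GJ where "GJ \<equiv> (\<integral>\<^sup>+x. ennreal (gg a b x) * indicator {p-L..p+L} x \<partial>lborel)"
  define GI where "GI \<equiv> (\<integral>\<^sup>+x. ennreal (gg a b x) * indicator {u..1-u} x \<partial>lborel)"
  have mb: "measure (trunc_beta_measure u a b) I \<ge> 4 * u * (1 - u) * enn2real GJ / enn2real GI"
    "enn2real GJ > 0" "enn2real GI \<ge> enn2real GJ"
    using main_bound[OF a u I(1,2), of "p-L" "p+L"] I(3) L unfolding GJ_def GI_def p_def by auto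
  have sp: "GI \<le> ennreal (1/L + 1) * GJ"
    using int_split[OF a u L p] unfolding GJ_def GI_def p_def by simp
  have "GJ \<le> ennreal (max 0 (p + L - (p - L)))"
    unfolding GJ_def using a u p p_def by (intro int_fin) auto
  then have GJt: "GJ < top" by (simp add: le_less_trans)
  have "enn2real GI \<le> enn2real (ennreal (1/L + 1) * GJ)"
    using sp GJt L by (intro enn2real_mono) (auto simp: ennreal_mult_less_top)
  also have "\<dots> = (1/L + 1) * enn2real GJ" using L by (simp add: enn2real_mult del: ennreal_plus)
  finally have GIle: "enn2real GI \<le> (1/L + 1) * enn2real GJ" .
  have GIpos: "enn2real GI > 0" using mb by linarith
  have "4 * u * (1 - u) / (1/L + 1) = 4 * u * (1 - u) * enn2real GJ / ((1/L + 1) * enn2real GJ)"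
    using mb(2) by simp
  also have "\<dots> \<le> 4 * u * (1 - u) * enn2real GJ / enn2real GI"
    using GIle GIpos mb(2) u by (intro divide_left_mono) (auto intro!: mult_pos_pos)
  finally show ?thesis using mb(1) by linarith
qed

lemma pos_bound:
  assumes a: "a > 0" "b > 0" and u: "0 < u" "u < 1/2"
    and I: "I \<subseteq> {u..1-u}" "I \<in> sets lborel" "{c..d} \<subseteq> I" and cd: "c < d"
  shows "measure (trunc_beta_measure u a b) I > 0"
proof -
  note mb = main_bound[OF a u I cd]
  have "0 < 4 * u * (1 - u) * enn2real (\<integral>\<^sup>+x. ennreal (gg a b x) * indicator {c..d} x \<partial>lborel)
        / enn2real (\<integral>\<^sup>+x. ennreal (gg a b x) * indicator {u..1-u} x \<partial>lborel)"
    using mb(2,3) u by (intro divide_pos_pos mult_pos_pos) auto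
  then show ?thesis using mb(1) by linarith
qed

lemma lim0: "(\<lambda>m::nat. ln (real m) / sqrt (real m)) \<longlonglongrightarrow> 0"
  by real_asymp

theorem lemma9:
  fixes \<upsilon> \<theta> :: real and \<alpha> \<beta> :: "nat \<Rightarrow> real" and I :: "real set"
  assumes "0 < \<upsilon>" "\<upsilon> < 1/2"
    and "\<And>m. m \<ge> 1 \<Longrightarrow> \<alpha> m > 0 \<and> \<beta> m > 0 \<and> \<alpha> m + \<beta> m = real m"
    and "is_interval I" "I \<subseteq> {\<upsilon>..1-\<upsilon>}" "\<theta> \<in> interior I"
    and "(\<lambda>m. \<bar>\<alpha> m / real m - \<theta>\<bar>) \<in> o(\<lambda>m. ln (real m) / sqrt (real m))"
  shows "(INF m\<in>{1..}. measure (trunc_beta_measure \<upsilon> (\<alpha> m) (\<beta> m)) I) > 0"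
proof -
  note u = assms(1,2)
  have Is: "I \<in> sets lborel" using real_interval_borel_measurable[OF assms(4)] by simp
  obtain e where e: "e > 0" "ball \<theta> e \<subseteq> I" using assms(6) mem_interior by blast
  define \<delta> where "\<delta> = e / 2"
  have \<delta>: "\<delta> > 0" "{\<theta>-\<delta>..\<theta>+\<delta>} \<subseteq> I"
    using e unfolding \<delta>_def by (auto simp: dist_real_def subset_iff)
  have \<theta>I: "{\<theta>-\<delta>..\<theta>+\<delta>} \<subseteq> {\<upsilon>..1-\<upsilon>}" using \<delta> assms(5) by blast
  define L where "L = \<delta> / 2"
  have L: "L > 0" using \<delta> L_def by simp
  have ev1: "eventually (\<lambda>m. norm \<bar>\<alpha> m / real m - \<theta>\<bar> \<le> 1 * norm (ln (real m) / sqrt (real m))) at_top"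
    using landau_o.smallD[OF assms(7), of 1] by simp
  have "(\<lambda>m::nat. norm (ln (real m) / sqrt (real m))) \<longlonglongrightarrow> 0"
    using tendsto_norm_zero[OF lim0] .
  then have ev2: "eventually (\<lambda>m. norm (ln (real m) / sqrt (real m)) < L) at_top"
    using L by (intro order_tendstoD(2)) auto
  from eventually_conj[OF ev1 ev2] obtain M where M: "\<And>m. m \<ge> M \<Longrightarrow> \<bar>\<alpha> m / real m - \<theta>\<bar> < L"
    unfolding eventually_sequentially by force
  define c0 where "c0 = 4 * \<upsilon> * (1 - \<upsilon>) / (1/L + 1)"
  have "0 < 1/L + 1" using L by (simp add: add_pos_pos)
  then have c0: "c0 > 0" using u L unfolding c0_def by (intro divide_pos_pos mult_pos_pos) auto
  let ?f = "\<lambda>m. measure (trunc_beta_measure \<upsilon> (\<alpha> m) (\<beta> m)) I"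
  have big: "?f m \<ge> c0" if m: "m \<ge> 1" "m \<ge> M" for m
  proof -
    have ab: "\<alpha> m > 0" "\<beta> m > 0" "\<alpha> m + \<beta> m = real m" using assms(3) m by auto
    have pm: "\<bar>\<alpha> m / (\<alpha> m + \<beta> m) - \<theta>\<bar> < L" using M[OF m(2)] ab by simp
    have sub: "{\<alpha> m / (\<alpha> m + \<beta> m) - L..\<alpha> m / (\<alpha> m + \<beta> m) + L} \<subseteq> {\<theta>-\<delta>..\<theta>+\<delta>}"
      using pm L_def by auto
    have "\<alpha> m / (\<alpha> m + \<beta> m) - L \<in> {\<upsilon>..1-\<upsilon>}" "\<alpha> m / (\<alpha> m + \<beta> m) + L \<in> {\<upsilon>..1-\<upsilon>}"
      using sub \<theta>I L by (auto simp: subset_iff)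
    moreover have "{\<alpha> m / (\<alpha> m + \<beta> m) - L..\<alpha> m / (\<alpha> m + \<beta> m) + L} \<subseteq> I"
      using sub \<delta>(2) by blast
    ultimately show ?thesis unfolding c0_def
      using ratio_bound[OF ab(1,2) u L _ _ assms(5) Is] by auto
  qed
  have pos: "?f m > 0" if m: "m \<ge> 1" for m
    using assms(3)[OF m] pos_bound[OF _ _ u assms(5) Is \<delta>(2)] \<delta>(1) by auto
  define c where "c = Min (insert c0 (?f ` {1..<M}))"
  have cpos: "c > 0" unfolding c_def using c0 pos by (subst Min_gr_iff) auto
  have "c \<le> (INF m\<in>{1..}. ?f m)"
  proof (rule cINF_greatest)
    show "{1::nat..} \<noteq> {}" by auto
    fix m :: nat assume m: "m \<in> {1..}"
    show "c \<le> ?f m"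
    proof (cases "m < M")
      case True
      then show ?thesis unfolding c_def using m by (intro Min_le) auto
    next
      case False
      then have "c0 \<le> ?f m" using big m by auto
      moreover have "c \<le> c0" unfolding c_def by (intro Min_le) auto
      ultimately show ?thesis by linarith
    qed
  qed
  then show ?thesis using cpos by linarith
qed

end
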